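(* Let $d, m \geq 1$ be integers, let $\boldsymbol{H} \in \mathbb{R}^{d\times d}$ be a deterministic symmetric matrix, and let $\Phi$ denote the standard normal cumulative distribution function, with $q_{1-\delta} = \Phi^{-1}(1-\delta)$ for $\delta \in (0,1)$. Let $(F, \boldsymbol{G}) \in \mathbb{R}\times\mathbb{R}^d$ be jointly Gaussian with mean $(\mu_f, \boldsymbol{\mu}_{\nabla f})$ and covariance matrix $\begin{bmatrix} \sigma_f^2 & \boldsymbol{\Sigma}_{\nabla f,f}^\top \\ \boldsymbol{\Sigma}_{\nabla f,f} & \boldsymbol{\Sigma}_{\nabla f}\end{bmatrix} = \boldsymbol{L}_f \boldsymbol{L}_f^\top$, where $\boldsymbol{L}_f \in \mathbb{R}^{(d+1)\times(d+1)}$. For each $i \in \{1,\dots,m\}$, let $(C_i, \boldsymbol{G}_i) \in \mathbb{R}\times\mathbb{R}^d$ be jointly Gaussian with mean $(\mu_{c_i}, \boldsymbol{\mu}_{\nabla c_i})$ and covariance matrix $\begin{bmatrix} \sigma_{c_i}^2 & \boldsymbol{\Sigma}_{\nabla c_i,c_i}^\top \\ \boldsymbol{\Sigma}_{\nabla c_i,c_i} & \boldsymbol{\Sigma}_{\nabla c_i}\end{bmatrix} = \boldsymbol{L}_{c_i} \boldsymbol{L}_{c_i}^\top$, where $\boldsymbol{L}_{c_i} \in \mathbb{R}^{(d+1)\times(d+1)}$. For $\delta_f, \delta_c \in (0,1)$, consider the following second-order cone program (B-SUB) in the variables $\boldsymbol{p} \in \mathbb{R}^d$, $b_f \in \mathbb{R}$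 and $b_{c_1},\dots,b_{c_m} \in \mathbb{R}$: $$\min \ \tfrac12 \boldsymbol{p}^\top \boldsymbol{H}\boldsymbol{p} + \boldsymbol{\mu}_{\nabla f}^\top \boldsymbol{p} + \mu_f + q_{1-\delta_f} b_f$$ subject to $$\Big\|\boldsymbol{L}_f^\top \begin{bmatrix}1\\ \boldsymbol{p}\end{bmatrix}\Big\|_2 \le b_f, \qquad \Big\|\boldsymbol{L}_{c_i}^\top \begin{bmatrix}1\\ \boldsymbol{p}\end{bmatrix}\Big\|_2 \le b_{c_i}, \qquad -\boldsymbol{\mu}_{\nabla c_i}^\top \boldsymbol{p} + q_{1-\delta_c} b_{c_i} \le \mu_{c_i}$$ for all $i \in \{1,\dots,m\}$. Consider also the expected-value subproblem in the variable $\boldsymbol{p} \in \mathbb{R}^d$: $$\min_{\boldsymbol{p}} \ \mathbb{E}\big[\tfrac12 \boldsymbol{p}^\top\boldsymbol{H}\boldsymbol{p} + \boldsymbol{G}^\top \boldsymbol{p} + F\big]$$ subject to $$\mathbb{E}\big[C_i + \boldsymbol{G}_i^\top \boldsymbol{p}\big] \ge 0 \quad \text{for all } i\in\{1,\dots,m\}.$$ Then, for $\delta_f = 0.5$ and $\delta_c = 0.5$, the search-direction solutions of the two problems coincide: a vector $\boldsymbol{p}$ is the $\boldsymbol{p}$-component of an optimal solution of B-SUB if and only if $\boldsymbol{p}$ is an optimal solution of the expected-value subproblem.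
   Context: This result arises in a Bayesian sequential quadratic programming method. At the current iterate $\boldsymbol{x}_t$, Gaussian process posteriors give jointly Gaussian distributions for the objective value and gradient $(f(\boldsymbol{x}_t), \nabla f(\boldsymbol{x}_t))$ and for each constraint value and gradient $(c_i(\boldsymbol{x}_t), \nabla c_i(\boldsymbol{x}_t))$, with the means and covariances stated in the claim. The matrix $\boldsymbol{H}$ is a deterministic approximation of the Hessian of the Lagrangian. B-SUB is the tractable reformulation of an uncertainty-aware subproblem. In that subproblem the objective is replaced by its value-at-risk at level $1-\delta_f$, and each linearized constraint is required to hold with probability at least $1-\delta_c$. *)

theory Defs
  imports "HOL-Probability.Probability"
begin

text \<open>Vectors in R^n are encoded as functions nat => real that vanish outside {..<n};
  matrices as nat => nat => real, only entries with indices below the size matter.\<close>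

definition vecs :: "nat \<Rightarrow> (nat \<Rightarrow> real) set" where
  "vecs n = {p. \<forall>k\<ge>n. p k = 0}"

definition Phi :: "real \<Rightarrow> real" where
  "Phi x = measure (density lborel std_normal_density) {..x}"

definition qnorm :: "real \<Rightarrow> real" where
  "qnorm a = (THE x. Phi x = a)"

definition normLT :: "nat \<Rightarrow> (nat \<Rightarrow> nat \<Rightarrow> real) \<Rightarrow> (nat \<Rightarrow> real) \<Rightarrow> real" where
  "normLT n L v = sqrt (\<Sum>j<n. (\<Sum>k<n. L k j * v k)\<^sup>2)"

definition one_p :: "(nat \<Rightarrow> real) \<Rightarrow> nat \<Rightarrow> real" where
  "one_p p k = (if k = 0 then 1 else p (k - 1))"

definition stack :: "('a \<Rightarrow> real) \<Rightarrow> (nat \<Rightarrow> 'a \<Rightarrow> real) \<Rightarrow> nat \<Rightarrow> 'a \<Rightarrow> real" where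
  "stack V W k = (if k = 0 then V else W (k - 1))"

definition stackv :: "real \<Rightarrow> (nat \<Rightarrow> real) \<Rightarrow> nat \<Rightarrow> real" where
  "stackv v w k = (if k = 0 then v else w (k - 1))"

text \<open>Jointly Gaussian random vector (X_0..X_{n-1}) with mean mu and covariance L L^T
  (possibly degenerate), characterised via all linear combinations (Cramer--Wold):
  each a^T X is normal with mean a^T mu and variance a^T L L^T a = |L^T a|^2,
  degenerate (a.s. constant) when that variance is zero.\<close>
definition gaussian_vec ::
  "'a measure \<Rightarrow> nat \<Rightarrow> (nat \<Rightarrow> 'a \<Rightarrow> real) \<Rightarrow> (nat \<Rightarrow> real) \<Rightarrow> (nat \<Rightarrow> nat \<Rightarrow> real) \<Rightarrow> bool" where
  "gaussian_vec M n X mu L \<longleftrightarrow>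
     (\<forall>k<n. X k \<in> borel_measurable M) \<and>
     (\<forall>a. let s = normLT n L a; c = (\<Sum>k<n. a k * mu k);
              Y = (\<lambda>\<omega>. \<Sum>k<n. a k * X k \<omega>) in
          (if s > 0 then distributed M lborel Y (normal_density c s)
           else (AE \<omega> in M. Y \<omega> = c)))"

definition quad :: "nat \<Rightarrow> (nat \<Rightarrow> nat \<Rightarrow> real) \<Rightarrow> (nat \<Rightarrow> real) \<Rightarrow> real" where
  "quad d H p = (\<Sum>i<d. \<Sum>j<d. p i * H i j * p j)"

definition dotv :: "nat \<Rightarrow> (nat \<Rightarrow> real) \<Rightarrow> (nat \<Rightarrow> real) \<Rightarrow> real" where
  "dotv d u v = (\<Sum>k<d. u k * v k)"

definition bsub_feasible where
  "bsub_feasible d m Lf Lc mu_c mu_gc dc p bf bc \<longleftrightarrow>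
     normLT (d+1) Lf (one_p p) \<le> bf \<and>
     (\<forall>i<m. normLT (d+1) (Lc i) (one_p p) \<le> bc i \<and>
            - dotv d (mu_gc i) p + qnorm (1 - dc) * bc i \<le> mu_c i)"

definition bsub_obj where
  "bsub_obj d H mu_f mu_gf df p bf =
     quad d H p / 2 + dotv d mu_gf p + mu_f + qnorm (1 - df) * bf"

definition bsub_opt_p where
  "bsub_opt_p d m H mu_f mu_gf Lf Lc mu_c mu_gc df dc p \<longleftrightarrow>
     (\<exists>bf bc. bsub_feasible d m Lf Lc mu_c mu_gc dc p bf bc \<and>
        (\<forall>p' \<in> vecs d. \<forall>bf' bc'. bsub_feasible d m Lf Lc mu_c mu_gc dc p' bf' bc' \<longrightarrow>
            bsub_obj d H mu_f mu_gf df p bf \<le> bsub_obj d H mu_f mu_gf df p' bf'))"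

definition ev_feasible where
  "ev_feasible M d m C Gc p \<longleftrightarrow>
     (\<forall>i<m. prob_space.expectation M (\<lambda>\<omega>. C i \<omega> + (\<Sum>k<d. Gc i k \<omega> * p k)) \<ge> 0)"

definition ev_obj where
  "ev_obj M d H F G p =
     prob_space.expectation M (\<lambda>\<omega>. quad d H p / 2 + (\<Sum>k<d. G k \<omega> * p k) + F \<omega>)"

definition ev_opt where
  "ev_opt M d m H F G C Gc p \<longleftrightarrow>
     ev_feasible M d m C Gc p \<and>
     (\<forall>p' \<in> vecs d. ev_feasible M d m C Gc p' \<longrightarrow> ev_obj M d H F G p \<le> ev_obj M d H F G p')"

end

theory Submission imports Defs begin

abbreviation "NN \<equiv> density lborel (\<lambda>x. ennreal (std_normal_density x))"

lemma NN_emeasure: "A \<in> sets borel \<Longrightarrow> emeasure NN A = (\<integral>\<^sup>+ t. ennreal (std_normal_density t) * indicator A t \<partial>lborel)"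
  by (subst emeasure_density) auto

lemma Phi_0: "Phi 0 = 1/2"
proof -
  interpret N: prob_space NN using prob_space_normal_density by simp
  have e1: "emeasure NN {..0} = emeasure NN {0..}"
  proof -
    have "emeasure NN {..0} = (\<integral>\<^sup>+ t. ennreal (std_normal_density t) * indicator {..0} t \<partial>lborel)"
      by (rule NN_emeasure) simp
    also have "\<dots> = (\<integral>\<^sup>+ t. ennreal (std_normal_density (0 + -1 * t)) * indicator {..0} (0 + -1 * t) \<partial>lborel)"
      using nn_integral_real_affine[of "\<lambda>t. ennreal (std_normal_density t) * indicator {..0} t" "-1" 0] by simp
    also have "\<dots> = (\<integral>\<^sup>+ t. ennreal (std_normal_density t) * indicator {0..} t \<partial>lborel)"
      by (intro nn_integral_cong) (auto simp: normal_density_def indicator_def)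
    also have "\<dots> = emeasure NN {0..}" by (rule NN_emeasure[symmetric]) simp
    finally show ?thesis .
  qed
  have e0: "emeasure NN {0} = 0"
  proof -
    have "emeasure NN {0} = (\<integral>\<^sup>+ t. ennreal (std_normal_density t) * indicator {0} t \<partial>lborel)"
      by (rule NN_emeasure) simp
    also have "\<dots> = (\<integral>\<^sup>+ (t::real). 0 \<partial>lborel)"
    proof (rule nn_integral_cong_AE)
      show "AE t in lborel. ennreal (std_normal_density t) * indicator {0} t = 0"
        using AE_lborel_singleton[of "0::real"] by (rule eventually_mono) auto
    qed
    finally show ?thesis by simp
  qed
  have "{0..} = {0<..} \<union> {0::real}" by auto
  hence "emeasure NN {0..} = emeasure NN {0<..} + emeasure NN {0}"
    by (simp add: plus_emeasure)
  with e0 e1 have "emeasure NN {..0} = emeasure NN {0<..}" by simp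
  hence m: "measure NN {..0} = measure NN {0<..}" by (simp add: measure_def)
  have "measure NN (space NN - {..0}) = 1 - measure NN {..0}"
    by (rule N.prob_compl) simp
  moreover have "space NN - {..0} = {0<..}" by auto
  ultimately show ?thesis using m unfolding Phi_def by simp
qed

lemma Phi_mono: assumes "x < y" shows "Phi x < Phi y"
proof -
  interpret N: prob_space NN using prob_space_normal_density by simp
  have "{..y} = {..x} \<union> {x<..y}" using assms by auto
  hence s: "measure NN {..y} = measure NN {..x} + measure NN {x<..y}"
    using N.finite_measure_Union[of "{..x}" "{x<..y}"] by (simp add: disjoint_iff)
  have "emeasure NN {x<..y} \<noteq> 0"
  proof
    assume "emeasure NN {x<..y} = 0"
    hence "(\<integral>\<^sup>+ t. ennreal (std_normal_density t) * indicator {x<..y} t \<partial>lborel) = 0"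
      by (simp add: NN_emeasure)
    hence "AE t in lborel. ennreal (std_normal_density t) * indicator {x<..y} t = 0"
      by (subst (asm) nn_integral_0_iff_AE) auto
    hence "AE t in lborel. t \<notin> {x<..y}"
      by (rule eventually_mono) (auto simp: indicator_def normal_density_def)
    hence "emeasure lborel {x<..y} = 0"
      by (subst (asm) AE_iff_measurable[of "{x<..y}"]) auto
    thus False using assms by simp
  qed
  hence "measure NN {x<..y} \<noteq> 0"
    by (simp add: N.emeasure_eq_measure)
  hence "measure NN {x<..y} > 0"
    using measure_nonneg[of NN "{x<..y}"] by linarith
  thus ?thesis using s unfolding Phi_def by simp
qed

lemma qnorm_half: "qnorm (1/2) = 0"
  unfolding qnorm_def
proof (rule the_equality)
  show "Phi 0 = 1/2" by (rule Phi_0)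
  fix x assume "Phi x = 1/2"
  thus "x = 0" using Phi_mono[of x 0] Phi_mono[of 0 x] Phi_0
    by (cases x "0::real" rule: linorder_cases) auto
qed

lemma gv_lin:
  assumes P: "prob_space M" and g: "gaussian_vec M (d+1) (stack V W) (stackv v w) L"
  shows "integrable M (\<lambda>\<omega>. V \<omega> + (\<Sum>k<d. W k \<omega> * q k)) \<and>
         prob_space.expectation M (\<lambda>\<omega>. V \<omega> + (\<Sum>k<d. W k \<omega> * q k)) = v + (\<Sum>k<d. w k * q k)"
proof -
  interpret prob_space M by (rule P)
  define a where "a = one_p q"
  have meas: "\<forall>k<d+1. stack V W k \<in> borel_measurable M" and
    H: "let s = normLT (d+1) L a; c = (\<Sum>k<d+1. a k * stackv v w k);
              Y = (\<lambda>\<omega>. \<Sum>k<d+1. a k * stack V W k \<omega>) in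
          (if s > 0 then distributed M lborel Y (normal_density c s)
           else (AE \<omega> in M. Y \<omega> = c))"
    using g unfolding gaussian_vec_def by blast+
  have Yeq: "(\<lambda>\<omega>. \<Sum>k<d+1. a k * stack V W k \<omega>) = (\<lambda>\<omega>. V \<omega> + (\<Sum>k<d. W k \<omega> * q k))"
    by (rule ext, simp only: Suc_eq_plus1[symmetric] sum.lessThan_Suc_shift)
       (simp add: a_def one_p_def stack_def mult.commute)
  have ceq: "(\<Sum>k<d+1. a k * stackv v w k) = v + (\<Sum>k<d. w k * q k)"
    by (simp only: Suc_eq_plus1[symmetric] sum.lessThan_Suc_shift)
       (simp add: a_def one_p_def stackv_def mult.commute)
  define s where "s = normLT (d+1) L a"
  define Y where "Y = (\<lambda>\<omega>. V \<omega> + (\<Sum>k<d. W k \<omega> * q k))"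
  define c where "c = v + (\<Sum>k<d. w k * q k)"
  have H2: "if s > 0 then distributed M lborel Y (normal_density c s) else (AE \<omega> in M. Y \<omega> = c)"
    using H unfolding Let_def Yeq ceq s_def Y_def c_def .
  have Ymeas: "Y \<in> borel_measurable M"
  proof -
    have "V \<in> borel_measurable M" using meas[rule_format, of 0] by (simp add: stack_def)
    moreover have "\<And>k. k < d \<Longrightarrow> W k \<in> borel_measurable M"
      using meas by (auto simp: stack_def dest!: spec[of _ "Suc k" for k])
    ultimately show ?thesis unfolding Y_def by measurable
  qed
  show ?thesis
  proof (cases "s > 0")
    case True
    hence D: "distributed M lborel Y (normal_density c s)" using H2 by simp
    have "integrable M Y"
      by (rule distributed_integrable_var[OF D]) (auto intro: integrable_normal_moment_nz_1[OF True])
    moreover have "expectation Y = c" by (rule normal_distributed_expectation[OF True D])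
    ultimately show ?thesis unfolding Y_def c_def by simp
  next
    case False
    hence A: "AE \<omega> in M. Y \<omega> = c" using H2 by simp
    have "integrable M Y"
      using integrable_cong_AE[of Y M "\<lambda>_. c"] A Ymeas by auto
    moreover have "expectation Y = expectation (\<lambda>_. c)"
      by (rule integral_cong_AE) (use A Ymeas in auto)
    ultimately show ?thesis unfolding Y_def c_def by (simp add: prob_space)
  qed
qed

theorem corollary1:
  fixes M :: "'a measure"
    and d m :: nat
    and H :: "nat \<Rightarrow> nat \<Rightarrow> real"
    and F :: "'a \<Rightarrow> real" and G :: "nat \<Rightarrow> 'a \<Rightarrow> real"
    and mu_f :: real and mu_gf :: "nat \<Rightarrow> real" and Lf :: "nat \<Rightarrow> nat \<Rightarrow> real"
    and C :: "nat \<Rightarrow> 'a \<Rightarrow> real" and Gc :: "nat \<Rightarrow> nat \<Rightarrow> 'a \<Rightarrow> real"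
    and mu_c :: "nat \<Rightarrow> real" and mu_gc :: "nat \<Rightarrow> nat \<Rightarrow> real"
    and Lc :: "nat \<Rightarrow> nat \<Rightarrow> nat \<Rightarrow> real"
    and p :: "nat \<Rightarrow> real"
  assumes "prob_space M"
    and "d \<ge> 1" and "m \<ge> 1"
    and "\<forall>i<d. \<forall>j<d. H i j = H j i"
    and "gaussian_vec M (d+1) (stack F G) (stackv mu_f mu_gf) Lf"
    and "\<forall>i<m. gaussian_vec M (d+1) (stack (C i) (Gc i)) (stackv (mu_c i) (mu_gc i)) (Lc i)"
    and "p \<in> vecs d"
  shows "bsub_opt_p d m H mu_f mu_gf Lf Lc mu_c mu_gc (1/2) (1/2) p
         \<longleftrightarrow> ev_opt M d m H F G C Gc p"
proof -
  interpret prob_space M by (rule assms(1))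
  define feasC where "feasC = (\<lambda>p'. \<forall>i<m. mu_c i + dotv d (mu_gc i) p' \<ge> 0)"
  define objE where "objE = (\<lambda>p'. quad d H p' / 2 + dotv d mu_gf p' + mu_f)"
  have evf: "ev_feasible M d m C Gc p' \<longleftrightarrow> feasC p'" for p'
  proof -
    have "\<forall>i<m. expectation (\<lambda>\<omega>. C i \<omega> + (\<Sum>k<d. Gc i k \<omega> * p' k)) = mu_c i + dotv d (mu_gc i) p'"
      using gv_lin[OF assms(1)] assms(6) by (auto simp: dotv_def)
    thus ?thesis unfolding ev_feasible_def feasC_def by auto
  qed
  have evo: "ev_obj M d H F G p' = objE p'" for p'
  proof -
    have L: "integrable M (\<lambda>\<omega>. F \<omega> + (\<Sum>k<d. G k \<omega> * p' k)) \<and>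
         expectation (\<lambda>\<omega>. F \<omega> + (\<Sum>k<d. G k \<omega> * p' k)) = mu_f + (\<Sum>k<d. mu_gf k * p' k)"
      by (rule gv_lin[OF assms(1) assms(5)])
    have "ev_obj M d H F G p' = expectation (\<lambda>\<omega>. quad d H p' / 2 + (F \<omega> + (\<Sum>k<d. G k \<omega> * p' k)))"
      unfolding ev_obj_def by (simp add: algebra_simps)
    also have "\<dots> = quad d H p' / 2 + expectation (\<lambda>\<omega>. F \<omega> + (\<Sum>k<d. G k \<omega> * p' k))"
      using L by (simp add: prob_space)
    finally show ?thesis using L unfolding objE_def dotv_def by simp
  qed
  have q0: "qnorm (1 - 1/2) = 0" using qnorm_half by simp
  have bf: "bsub_feasible d m Lf Lc mu_c mu_gc (1/2) p' bf bc \<longleftrightarrow>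
     normLT (d+1) Lf (one_p p') \<le> bf \<and> (\<forall>i<m. normLT (d+1) (Lc i) (one_p p') \<le> bc i) \<and> feasC p'"
    for p' bf bc
    unfolding bsub_feasible_def feasC_def q0 by auto
  have bo: "bsub_obj d H mu_f mu_gf (1/2) p' bf = objE p'" for p' bf
    unfolding bsub_obj_def objE_def q0 by simp
  have "bsub_opt_p d m H mu_f mu_gf Lf Lc mu_c mu_gc (1/2) (1/2) p \<longleftrightarrow>
        feasC p \<and> (\<forall>p'\<in>vecs d. feasC p' \<longrightarrow> objE p \<le> objE p')"
  proof
    assume "bsub_opt_p d m H mu_f mu_gf Lf Lc mu_c mu_gc (1/2) (1/2) p"
    then obtain bf0 bc0 where f0: "bsub_feasible d m Lf Lc mu_c mu_gc (1/2) p bf0 bc0" and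
      o: "\<forall>p' \<in> vecs d. \<forall>bf' bc'. bsub_feasible d m Lf Lc mu_c mu_gc (1/2) p' bf' bc' \<longrightarrow>
            bsub_obj d H mu_f mu_gf (1/2) p bf0 \<le> bsub_obj d H mu_f mu_gf (1/2) p' bf'"
      unfolding bsub_opt_p_def by blast
    show "feasC p \<and> (\<forall>p'\<in>vecs d. feasC p' \<longrightarrow> objE p \<le> objE p')"
    proof (intro conjI ballI impI)
      show "feasC p" using f0 bf by blast
      fix p' assume "p' \<in> vecs d" "feasC p'"
      hence "bsub_feasible d m Lf Lc mu_c mu_gc (1/2) p' (normLT (d+1) Lf (one_p p')) (\<lambda>i. normLT (d+1) (Lc i) (one_p p'))"
        using bf by auto
      thus "objE p \<le> objE p'" using o \<open>p' \<in> vecs d\<close> bo by metis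
    qed
  next
    assume A: "feasC p \<and> (\<forall>p'\<in>vecs d. feasC p' \<longrightarrow> objE p \<le> objE p')"
    show "bsub_opt_p d m H mu_f mu_gf Lf Lc mu_c mu_gc (1/2) (1/2) p"
      unfolding bsub_opt_p_def
    proof (intro exI conjI)
      show "bsub_feasible d m Lf Lc mu_c mu_gc (1/2) p (normLT (d+1) Lf (one_p p)) (\<lambda>i. normLT (d+1) (Lc i) (one_p p))"
        using bf A by auto
      show "\<forall>p' \<in> vecs d. \<forall>bf' bc'. bsub_feasible d m Lf Lc mu_c mu_gc (1/2) p' bf' bc' \<longrightarrow>
            bsub_obj d H mu_f mu_gf (1/2) p (normLT (d+1) Lf (one_p p)) \<le> bsub_obj d H mu_f mu_gf (1/2) p' bf'"
        using A bf bo by metis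
    qed
  qed
  moreover have "ev_opt M d m H F G C Gc p \<longleftrightarrow> feasC p \<and> (\<forall>p'\<in>vecs d. feasC p' \<longrightarrow> objE p \<le> objE p')"
    unfolding ev_opt_def evf evo ..
  ultimately show ?thesis by simp
qed

end
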